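(* Let $P$ be a pattern and let $\mathcal{O}$ be the list of schedules output by the schedule generation procedure described in the context (with any fixed iteration orders). Then (i) no two distinct schedules in $\mathcal{O}$ are equivalent, and (ii) every schedule for $P$ is equivalent to some schedule in $\mathcal{O}$. That is, $\mathcal{O}$ contains exactly one representative of each equivalence class of schedules for $P$.
   Context: A pattern $P$ is a finite simple connected graph on $n$ labeled vertices; $\mathrm{Aut}(P)$ is its automorphism group (bijections $V(P)\to V(P)$ preserving adjacency and non-adjacency). A schedule for $P$ is a sequence $S=(S[0],\dots,S[n-1])$ listing every vertex of $P$ exactly once such that each $S[k]$ with $k\ge 1$ is adjacent in $P$ to some $S[j]$ with $j<k$. Two schedules $S,S'$ are equivalent if there is $\phi\in\mathrm{Aut}(P)$ with $\phi(S[i])=S'[i]$ for all $i$. Schedule generation procedure: call $\mathrm{Gen}((),\mathrm{Aut}(P))$, where $\mathrm{Gen}(s,A)$, for a partial sequence $s$ of distinct vertices and a set $A$ of automorphisms (in each call $A$ is exactly the set of automorphisms fixing every vertex of $s$), does the following. If $s$ contains all vertices of $P$, output $s$ and return. Otherwise let $C=V(P)$ if $s$ is empty, and otherwise let $C$ be the set of vertices not in $s$ that are adjacent to at least one vertex of $s$. Initialize a set $\mathrm{processed}=\emptyset$ (local to this call) and iterate over $v\in C$ in some fixed order: if $v\in\mathrm{processed}$, skip $v$; otherwise, for every $x\in A$ with $x(v)\neq v$ add $x(v)$ to $\mathrm{processed}$, and call $\mathrm{Gen}(s+(v),\{x\in A : x(v)=v\})$. *)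

theory Defs
  imports Main
begin

definition pattern :: "'a set \<Rightarrow> ('a \<Rightarrow> 'a \<Rightarrow> bool) \<Rightarrow> bool" where
  "pattern V E \<longleftrightarrow> finite V \<and> V \<noteq> {}
     \<and> (\<forall>u v. E u v \<longrightarrow> u \<in> V \<and> v \<in> V)
     \<and> (\<forall>u v. E u v \<longrightarrow> E v u)
     \<and> (\<forall>u. \<not> E u u)
     \<and> (\<forall>u\<in>V. \<forall>v\<in>V. E\<^sup>*\<^sup>* u v)"

definition Aut :: "'a set \<Rightarrow> ('a \<Rightarrow> 'a \<Rightarrow> bool) \<Rightarrow> ('a \<Rightarrow> 'a) set" where
  "Aut V E = {f. bij_betw f V V \<and> (\<forall>u\<in>V. \<forall>w\<in>V. E u w \<longleftrightarrow> E (f u) (f w))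
                \<and> (\<forall>u. u \<notin> V \<longrightarrow> f u = u)}"

definition is_schedule :: "'a set \<Rightarrow> ('a \<Rightarrow> 'a \<Rightarrow> bool) \<Rightarrow> 'a list \<Rightarrow> bool" where
  "is_schedule V E S \<longleftrightarrow> distinct S \<and> set S = V
     \<and> (\<forall>k. 1 \<le> k \<and> k < length S \<longrightarrow> (\<exists>j<k. E (S ! j) (S ! k)))"

definition sched_equiv :: "'a set \<Rightarrow> ('a \<Rightarrow> 'a \<Rightarrow> bool) \<Rightarrow> 'a list \<Rightarrow> 'a list \<Rightarrow> bool" where
  "sched_equiv V E S S' \<longleftrightarrow> length S = length S'
     \<and> (\<exists>\<phi>\<in>Aut V E. \<forall>i<length S. \<phi> (S ! i) = S' ! i)"

definition cand :: "'a set \<Rightarrow> ('a \<Rightarrow> 'a \<Rightarrow> bool) \<Rightarrow> 'a list \<Rightarrow> 'a set" where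
  "cand V E s = (if s = [] then V else {v \<in> V. v \<notin> set s \<and> (\<exists>u\<in>set s. E u v)})"

text \<open>An iteration order: for every call (identified by its partial sequence s),
  a duplicate-free enumeration of the candidate set.\<close>
definition valid_order :: "'a set \<Rightarrow> ('a \<Rightarrow> 'a \<Rightarrow> bool) \<Rightarrow> ('a list \<Rightarrow> 'a list) \<Rightarrow> bool" where
  "valid_order V E ord \<longleftrightarrow> (\<forall>s. distinct (ord s) \<and> set (ord s) = cand V E s)"

text \<open>The inner loop of Gen over the candidates, with recursive call g.\<close>
fun gen_loop :: "('a list \<Rightarrow> ('a \<Rightarrow> 'a) set \<Rightarrow> 'a list list) \<Rightarrow> ('a \<Rightarrow> 'a) set \<Rightarrow> 'a list
                 \<Rightarrow> 'a set \<Rightarrow> 'a list \<Rightarrow> 'a list list" where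
  "gen_loop g A s proc [] = []"
| "gen_loop g A s proc (v # vs) =
     (if v \<in> proc then gen_loop g A s proc vs
      else g (s @ [v]) {x \<in> A. x v = v}
           @ gen_loop g A s (proc \<union> {x v | x. x \<in> A \<and> x v \<noteq> v}) vs)"

text \<open>Gen with a fuel argument (recursion depth bound); fuel card V suffices.\<close>
primrec gen :: "'a set \<Rightarrow> ('a list \<Rightarrow> 'a list) \<Rightarrow> nat \<Rightarrow> 'a list \<Rightarrow> ('a \<Rightarrow> 'a) set \<Rightarrow> 'a list list" where
  "gen V ord 0 s A = (if V \<subseteq> set s then [s] else [])"
| "gen V ord (Suc k) s A = (if V \<subseteq> set s then [s] else gen_loop (gen V ord k) A s {} (ord s))"

definition gen_output :: "'a set \<Rightarrow> ('a \<Rightarrow> 'a \<Rightarrow> bool) \<Rightarrow> ('a list \<Rightarrow> 'a list) \<Rightarrow> 'a list list" where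
  "gen_output V E ord = gen V ord (card V) [] (Aut V E)"

end

theory Submission
  imports Defs
begin

definition Stab :: "'a set \<Rightarrow> ('a \<Rightarrow> 'a \<Rightarrow> bool) \<Rightarrow> 'a list \<Rightarrow> ('a \<Rightarrow> 'a) set" where
  "Stab V E s = {x \<in> Aut V E. \<forall>u\<in>set s. x u = u}"

definition psched :: "('a \<Rightarrow> 'a \<Rightarrow> bool) \<Rightarrow> 'a list \<Rightarrow> bool" where
  "psched E s \<longleftrightarrow> (\<forall>k. 1 \<le> k \<and> k < length s \<longrightarrow> (\<exists>j<k. E (s ! j) (s ! k)))"

definition Q :: "'a set \<Rightarrow> ('a \<Rightarrow> 'a \<Rightarrow> bool) \<Rightarrow> 'a list \<Rightarrow> 'a list \<Rightarrow> bool" where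
  "Q V E a b \<longleftrightarrow> \<not> sched_equiv V E a b \<and> \<not> sched_equiv V E b a"

definition inva :: "'a set \<Rightarrow> ('a \<Rightarrow> 'a) \<Rightarrow> 'a \<Rightarrow> 'a" where
  "inva V f u = (if u \<in> V then inv_into V f u else u)"

lemma aut_in: "f \<in> Aut V E \<Longrightarrow> u \<in> V \<Longrightarrow> f u \<in> V"
  unfolding Aut_def using bij_betwE by blast

lemma id_aut: "id \<in> Aut V E"
  unfolding Aut_def by auto

lemma aut_inv:
  assumes f: "f \<in> Aut V E"
  shows "inva V f \<in> Aut V E" "\<And>u. u \<in> V \<Longrightarrow> inva V f (f u) = u"
    "\<And>u. u \<in> V \<Longrightarrow> f (inva V f u) = u"
proof -
  have b: "bij_betw f V V" using f unfolding Aut_def by auto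
  show 1: "\<And>u. u \<in> V \<Longrightarrow> inva V f (f u) = u"
    using b unfolding inva_def
    by (simp add: bij_betw_imp_inj_on bij_betwE)
  show 2: "\<And>u. u \<in> V \<Longrightarrow> f (inva V f u) = u"
    using b unfolding inva_def
    by (simp add: bij_betw_imp_surj_on f_inv_into_f)
  have bi: "bij_betw (inva V f) V V"
  proof -
    have "bij_betw (inv_into V f) V V" using b bij_betw_inv_into by blast
    moreover have "\<And>u. u \<in> V \<Longrightarrow> inva V f u = inv_into V f u" unfolding inva_def by simp
    ultimately show ?thesis using bij_betw_cong by blast
  qed
  have iv: "\<And>u. u \<in> V \<Longrightarrow> inva V f u \<in> V" using bi bij_betwE by blast
  have "\<forall>u\<in>V. \<forall>w\<in>V. E u w \<longleftrightarrow> E (inva V f u) (inva V f w)"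
  proof (intro ballI)
    fix u w assume u: "u \<in> V" and w: "w \<in> V"
    have "E (inva V f u) (inva V f w) \<longleftrightarrow> E (f (inva V f u)) (f (inva V f w))"
      using f iv u w unfolding Aut_def by blast
    then show "E u w \<longleftrightarrow> E (inva V f u) (inva V f w)" using 2 u w by simp
  qed
  then show "inva V f \<in> Aut V E" using bi unfolding Aut_def inva_def by auto
qed

lemma aut_comp:
  assumes "f \<in> Aut V E" "g \<in> Aut V E"
  shows "g \<circ> f \<in> Aut V E"
proof -
  have "bij_betw (g \<circ> f) V V" using assms unfolding Aut_def using bij_betw_trans by blast
  moreover have "\<forall>u\<in>V. \<forall>w\<in>V. E u w \<longleftrightarrow> E ((g \<circ> f) u) ((g \<circ> f) w)"
  proof (intro ballI)
    fix u w assume u: "u \<in> V" and w: "w \<in> V"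
    have fu: "f u \<in> V" "f w \<in> V" using aut_in[OF assms(1)] u w by auto
    have "E u w \<longleftrightarrow> E (f u) (f w)" using assms(1) u w unfolding Aut_def by blast
    also have "\<dots> \<longleftrightarrow> E (g (f u)) (g (f w))" using assms(2) fu unfolding Aut_def by blast
    finally show "E u w \<longleftrightarrow> E ((g \<circ> f) u) ((g \<circ> f) w)" by simp
  qed
  moreover have "\<forall>u. u \<notin> V \<longrightarrow> (g \<circ> f) u = u" using assms unfolding Aut_def by auto
  ultimately show ?thesis unfolding Aut_def by auto
qed

lemma equiv_trans:
  assumes "sched_equiv V E S T" "sched_equiv V E T U"
  shows "sched_equiv V E S U"
proof -
  obtain f where f: "f \<in> Aut V E" "\<forall>i<length S. f (S ! i) = T ! i" "length S = length T"
    using assms(1) unfolding sched_equiv_def by blast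
  obtain g where g: "g \<in> Aut V E" "\<forall>i<length T. g (T ! i) = U ! i" "length T = length U"
    using assms(2) unfolding sched_equiv_def by blast
  show ?thesis unfolding sched_equiv_def
    using f g aut_comp[OF f(1) g(1)] by (intro conjI bexI[of _ "g \<circ> f"]) auto
qed

lemma transfer:
  assumes pat: "pattern V E" and x: "x \<in> Aut V E" and S: "is_schedule V E S"
  shows "is_schedule V E (map x S) \<and> sched_equiv V E S (map x S)"
proof -
  have b: "bij_betw x V V" using x unfolding Aut_def by auto
  have sv: "set S = V" "distinct S" using S unfolding is_schedule_def by auto
  have "distinct (map x S)" using sv b by (simp add: distinct_map bij_betw_imp_inj_on)
  moreover have "set (map x S) = V" using sv b by (simp add: bij_betw_imp_surj_on)
  moreover have "\<forall>k. 1 \<le> k \<and> k < length (map x S) \<longrightarrow> (\<exists>j<k. E (map x S ! j) (map x S ! k))"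
  proof (intro allI impI)
    fix k assume k: "1 \<le> k \<and> k < length (map x S)"
    then obtain j where j: "j < k" "E (S ! j) (S ! k)" using S unfolding is_schedule_def by auto
    have "S ! j \<in> V" "S ! k \<in> V" using j k sv by auto
    then have "E (x (S ! j)) (x (S ! k))" using x j unfolding Aut_def by blast
    then show "\<exists>j<k. E (map x S ! j) (map x S ! k)" using j k by auto
  qed
  ultimately show ?thesis unfolding is_schedule_def sched_equiv_def using x by auto
qed

lemma core:
  assumes A: "A = Stab V E s" and ss: "set s \<subseteq> V" and vV: "v \<in> V" and wV: "w \<in> V"
    and a: "a = s @ v # t1" and b: "b = s @ w # t2" and nx: "\<forall>x\<in>A. x v \<noteq> w"
  shows "Q V E a b"
proof -
  have fixs: "\<phi> \<in> A" if "\<phi> \<in> Aut V E" "\<forall>i<length c. \<phi> (c ! i) = d ! i"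
    "c = s @ p # r1" "d = s @ q # r2" for \<phi> c d p q r1 r2
  proof -
    have "\<forall>u\<in>set s. \<phi> u = u"
    proof
      fix u assume "u \<in> set s"
      then obtain i where i: "i < length s" "s ! i = u" by (auto simp: in_set_conv_nth)
      have "\<phi> (c ! i) = d ! i" using that(2) i(1) that(3) by simp
      then show "\<phi> u = u" using i that(3,4) by (simp add: nth_append)
    qed
    then show ?thesis using A that(1) unfolding Stab_def by auto
  qed
  have pos: "\<phi> p = q" if "\<forall>i<length c. \<phi> (c ! i) = d ! i"
    "c = s @ p # r1" "d = s @ q # r2" for \<phi> c d p q r1 r2
  proof -
    have "length s < length c" using that(2) by simp
    then have "\<phi> (c ! length s) = d ! length s" using that(1) by blast
    then show ?thesis using that(2,3) by (simp add: nth_append)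
  qed
  have n1: "\<not> sched_equiv V E a b"
  proof
    assume "sched_equiv V E a b"
    then obtain \<phi> where ph: "\<phi> \<in> Aut V E" "\<forall>i<length a. \<phi> (a ! i) = b ! i"
      unfolding sched_equiv_def by blast
    have "\<phi> \<in> A" using fixs[OF ph a b] .
    moreover have "\<phi> v = w" using pos[OF ph(2) a b] .
    ultimately show False using nx by blast
  qed
  have n2: "\<not> sched_equiv V E b a"
  proof
    assume "sched_equiv V E b a"
    then obtain \<phi> where ph: "\<phi> \<in> Aut V E" "\<forall>i<length b. \<phi> (b ! i) = a ! i"
      unfolding sched_equiv_def by blast
    have pA: "\<phi> \<in> A" using fixs[OF ph b a] .
    have pw: "\<phi> w = v" using pos[OF ph(2) b a] .
    have "\<forall>u\<in>set s. inva V \<phi> u = u"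
    proof
      fix u assume u: "u \<in> set s"
      then have "\<phi> u = u" using pA A unfolding Stab_def by auto
      then show "inva V \<phi> u = u" using aut_inv(2)[OF ph(1), of u] u ss by auto
    qed
    then have "inva V \<phi> \<in> A" using aut_inv(1)[OF ph(1)] A unfolding Stab_def by auto
    moreover have "inva V \<phi> v = w" using aut_inv(2)[OF ph(1) wV] pw by simp
    ultimately show False using nx by blast
  qed
  show ?thesis using n1 n2 unfolding Q_def by auto
qed

lemma loop_props:
  assumes pat: "pattern V E" and A: "A = Stab V E s" and ss: "set s \<subseteq> V"
    and G: "\<And>v. v \<in> cand V E s \<Longrightarrow>
      (\<forall>S\<in>set (g (s@[v]) {x\<in>A. x v = v}). is_schedule V E S \<and> (\<exists>t. S = s@v#t))
      \<and> sorted_wrt (Q V E) (g (s@[v]) {x\<in>A. x v = v})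
      \<and> (\<forall>S. is_schedule V E S \<and> (\<exists>t. S = s@v#t) \<longrightarrow> (\<exists>S'\<in>set (g (s@[v]) {x\<in>A. x v = v}). sched_equiv V E S S'))"
  shows "distinct vs \<Longrightarrow> set vs \<subseteq> cand V E s \<Longrightarrow>
    (\<forall>S\<in>set (gen_loop g A s proc vs). is_schedule V E S \<and> (\<exists>v\<in>set vs. v \<notin> proc \<and> (\<exists>t. S = s@v#t)))
    \<and> sorted_wrt (Q V E) (gen_loop g A s proc vs)
    \<and> (\<forall>u\<in>set vs. u \<notin> proc \<longrightarrow> (\<forall>S. is_schedule V E S \<and> (\<exists>t. S = s@u#t) \<longrightarrow> (\<exists>S'\<in>set (gen_loop g A s proc vs). sched_equiv V E S S')))"
proof (induction vs arbitrary: proc)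
  case Nil
  then show ?case by simp
next
  case (Cons v vs)
  have vc: "v \<in> cand V E s" and vsc: "set vs \<subseteq> cand V E s" and vnot: "v \<notin> set vs"
    and dvs: "distinct vs" using Cons.prems by auto
  have candV: "\<And>w. w \<in> cand V E s \<Longrightarrow> w \<in> V" unfolding cand_def by (auto split: if_splits)
  show ?case
  proof (cases "v \<in> proc")
    case True
    have eq: "gen_loop g A s proc (v # vs) = gen_loop g A s proc vs" using True by simp
    note IH0 = Cons.IH[OF dvs vsc, of proc]
    have a: "\<forall>S\<in>set (gen_loop g A s proc vs). is_schedule V E S \<and> (\<exists>v'\<in>set (v#vs). v' \<notin> proc \<and> (\<exists>t. S = s@v'#t))"
    proof
      fix S assume "S \<in> set (gen_loop g A s proc vs)"
      then have "is_schedule V E S \<and> (\<exists>v'\<in>set vs. v' \<notin> proc \<and> (\<exists>t. S = s@v'#t))" using IH0 by blast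
      then show "is_schedule V E S \<and> (\<exists>v'\<in>set (v#vs). v' \<notin> proc \<and> (\<exists>t. S = s@v'#t))" by auto
    qed
    have c: "\<forall>u\<in>set (v#vs). u \<notin> proc \<longrightarrow> (\<forall>S. is_schedule V E S \<and> (\<exists>t. S = s@u#t) \<longrightarrow> (\<exists>S'\<in>set (gen_loop g A s proc vs). sched_equiv V E S S'))"
    proof (intro ballI impI)
      fix u assume "u \<in> set (v#vs)" "u \<notin> proc"
      then have "u \<in> set vs" using True by auto
      then show "\<forall>S. is_schedule V E S \<and> (\<exists>t. S = s@u#t) \<longrightarrow> (\<exists>S'\<in>set (gen_loop g A s proc vs). sched_equiv V E S S')"
        using IH0 \<open>u \<notin> proc\<close> by blast
    qed
    have b: "sorted_wrt (Q V E) (gen_loop g A s proc vs)" using IH0 by blast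
    show ?thesis unfolding eq by (rule conjI[OF a conjI[OF b c]])
  next
    case False
    define orb where "orb = {x v | x. x \<in> A \<and> x v \<noteq> v}"
    define g1 where "g1 = g (s@[v]) {x\<in>A. x v = v}"
    define L where "L = gen_loop g A s (proc \<union> orb) vs"
    have eq: "gen_loop g A s proc (v # vs) = g1 @ L"
      using False unfolding g1_def L_def orb_def by simp
    note Gv = G[OF vc, folded g1_def]
    note IH = Cons.IH[OF dvs vsc, of "proc \<union> orb", folded L_def]
    have a: "\<forall>S\<in>set (g1 @ L). is_schedule V E S \<and> (\<exists>v'\<in>set (v#vs). v' \<notin> proc \<and> (\<exists>t. S = s@v'#t))"
    proof
      fix S assume "S \<in> set (g1 @ L)"
      then consider "S \<in> set g1" | "S \<in> set L" by auto
      then show "is_schedule V E S \<and> (\<exists>v'\<in>set (v#vs). v' \<notin> proc \<and> (\<exists>t. S = s@v'#t))"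
      proof cases
        case 1
        then have "is_schedule V E S \<and> (\<exists>t. S = s@v#t)" using Gv by blast
        then show ?thesis using False by auto
      next
        case 2
        then have "is_schedule V E S \<and> (\<exists>v'\<in>set vs. v' \<notin> proc \<union> orb \<and> (\<exists>t. S = s@v'#t))" using IH by blast
        then show ?thesis by auto
      qed
    qed
    have b: "sorted_wrt (Q V E) (g1 @ L)"
      unfolding sorted_wrt_append
    proof (intro conjI ballI)
      show "sorted_wrt (Q V E) g1" using Gv by blast
      show "sorted_wrt (Q V E) L" using IH by blast
      fix x y assume x: "x \<in> set g1" and y: "y \<in> set L"
      obtain t1 where t1: "x = s@v#t1" using Gv x by blast
      obtain w t2 where w: "w \<in> set vs" "w \<notin> proc \<union> orb" "y = s@w#t2" using IH y by blast
      have "w \<noteq> v" using w vnot by auto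
      then have "\<forall>x\<in>A. x v \<noteq> w" using w(2) unfolding orb_def by auto
      moreover have "w \<in> V" using candV w(1) vsc by auto
      ultimately show "Q V E x y" using core[OF A ss candV[OF vc] _ t1 w(3)] by blast
    qed
    have c: "\<forall>u\<in>set (v#vs). u \<notin> proc \<longrightarrow> (\<forall>S. is_schedule V E S \<and> (\<exists>t. S = s@u#t) \<longrightarrow> (\<exists>S'\<in>set (g1 @ L). sched_equiv V E S S'))"
    proof (intro ballI impI allI)
      fix u S assume u: "u \<in> set (v#vs)" "u \<notin> proc" and S: "is_schedule V E S \<and> (\<exists>t. S = s@u#t)"
      show "\<exists>S'\<in>set (g1 @ L). sched_equiv V E S S'"
      proof (cases "u = v")
        case True
        have "\<forall>S. is_schedule V E S \<and> (\<exists>t. S = s@v#t) \<longrightarrow> (\<exists>S'\<in>set g1. sched_equiv V E S S')"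
          using Gv by blast
        then obtain S' where "S' \<in> set g1" "sched_equiv V E S S'" using S True by blast
        then show ?thesis by auto
      next
        case uv: False
        then have uvs: "u \<in> set vs" using u by auto
        show ?thesis
        proof (cases "u \<in> orb")
          case False
          then obtain S' where "S' \<in> set L" "sched_equiv V E S S'" using IH uvs u S by blast
          then show ?thesis by auto
        next
          case True
          then obtain x where x: "x \<in> A" "x v = u" unfolding orb_def by blast
          have xa: "x \<in> Aut V E" using x A unfolding Stab_def by auto
          define y where "y = inva V x"
          have ya: "y \<in> Aut V E" using aut_inv(1)[OF xa] y_def by simp
          have ys: "\<forall>w\<in>set s. y w = w"
          proof
            fix w assume w: "w \<in> set s"
            then have "x w = w" using x A unfolding Stab_def by auto
            then show "y w = w" using aut_inv(2)[OF xa, of w] w ss y_def by auto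
          qed
          have yu: "y u = v" using aut_inv(2)[OF xa candV[OF vc]] x y_def by simp
          obtain t where t: "S = s@u#t" using S by blast
          have tr: "is_schedule V E (map y S) \<and> sched_equiv V E S (map y S)"
            using transfer[OF pat ya] S by blast
          have "map y s = s" using ys by (intro map_idI) blast
          then have "map y S = s @ v # map y t" using t yu by simp
          moreover have "\<forall>S. is_schedule V E S \<and> (\<exists>t. S = s@v#t) \<longrightarrow> (\<exists>S'\<in>set g1. sched_equiv V E S S')"
            using Gv by blast
          ultimately obtain S' where S': "S' \<in> set g1" "sched_equiv V E (map y S) S'"
            using tr by blast
          have "sched_equiv V E S S'" using equiv_trans[OF _ S'(2)] tr by blast
          then show ?thesis using S'(1) by auto
        qed
      qed
    qed
    show ?thesis unfolding eq by (rule conjI[OF a conjI[OF b c]])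
  qed
qed

lemma gen_props:
  assumes pat: "pattern V E" and vo: "valid_order V E ord"
  shows "distinct s \<Longrightarrow> set s \<subseteq> V \<Longrightarrow> length s + k = card V \<Longrightarrow> psched E s \<Longrightarrow> A = Stab V E s \<Longrightarrow>
   (\<forall>S\<in>set (gen V ord k s A). is_schedule V E S \<and> (\<exists>t. S = s@t))
   \<and> sorted_wrt (Q V E) (gen V ord k s A)
   \<and> (\<forall>S. is_schedule V E S \<and> (\<exists>t. S = s@t) \<longrightarrow> (\<exists>S'\<in>set (gen V ord k s A). sched_equiv V E S S'))"
proof (induction k arbitrary: s A)
  case 0
  have fin: "finite V" using pat unfolding pattern_def by auto
  have ls: "length s = card V" using 0(3) by simp
  have cs: "card (set s) = card V" using distinct_card[OF 0(1)] ls by simp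
  have sV: "set s = V" by (rule card_subset_eq[OF fin 0(2) cs])
  have sch: "is_schedule V E s" using 0(1,4) sV unfolding is_schedule_def psched_def by simp
  have eqS: "sched_equiv V E S s" if "is_schedule V E S" "S = s@t" for S t
  proof -
    have dS: "distinct S" "set S = V" using that(1) unfolding is_schedule_def by auto
    have "length S = card V" using distinct_card[OF dS(1)] dS(2) by simp
    then have "t = []" using that(2) ls by simp
    then have "S = s" using that(2) by simp
    moreover have "sched_equiv V E s s" using id_aut unfolding sched_equiv_def
      by (intro conjI refl bexI[of _ id]) auto
    ultimately show ?thesis by simp
  qed
  have g0: "gen V ord 0 s A = [s]" using sV by simp
  have a: "\<forall>S\<in>set (gen V ord 0 s A). is_schedule V E S \<and> (\<exists>t. S = s@t)" unfolding g0 using sch by simp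
  have b: "sorted_wrt (Q V E) (gen V ord 0 s A)" unfolding g0 by simp
  have c: "\<forall>S. is_schedule V E S \<and> (\<exists>t. S = s@t) \<longrightarrow> (\<exists>S'\<in>set (gen V ord 0 s A). sched_equiv V E S S')"
    unfolding g0 using eqS by auto
  show ?case by (rule conjI[OF a conjI[OF b c]])
next
  case (Suc k)
  have fin: "finite V" using pat unfolding pattern_def by auto
  have notV: "\<not> V \<subseteq> set s"
  proof
    assume "V \<subseteq> set s"
    then have "card V \<le> card (set s)" using card_mono by auto
    also have "\<dots> = length s" using Suc.prems distinct_card by blast
    finally show False using Suc.prems by simp
  qed
  have eq: "gen V ord (Suc k) s A = gen_loop (gen V ord k) A s {} (ord s)" using notV by simp
  have candV: "\<And>w. w \<in> cand V E s \<Longrightarrow> w \<in> V" unfolding cand_def by (auto split: if_splits)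
  have G: "(\<forall>S\<in>set (gen V ord k (s@[v]) {x\<in>A. x v = v}). is_schedule V E S \<and> (\<exists>t. S = s@v#t))
      \<and> sorted_wrt (Q V E) (gen V ord k (s@[v]) {x\<in>A. x v = v})
      \<and> (\<forall>S. is_schedule V E S \<and> (\<exists>t. S = s@v#t) \<longrightarrow> (\<exists>S'\<in>set (gen V ord k (s@[v]) {x\<in>A. x v = v}). sched_equiv V E S S'))"
    if vc: "v \<in> cand V E s" for v
  proof -
    have vns: "v \<notin> set s" using vc unfolding cand_def by (auto split: if_splits)
    have d: "distinct (s@[v])" using vns Suc.prems by simp
    have sub: "set (s@[v]) \<subseteq> V" using candV[OF vc] Suc.prems by simp
    have len: "length (s@[v]) + k = card V" using Suc.prems by simp
    have ps: "psched E (s@[v])" unfolding psched_def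
    proof (intro allI impI)
      fix k' assume k': "1 \<le> k' \<and> k' < length (s@[v])"
      show "\<exists>j<k'. E ((s@[v]) ! j) ((s@[v]) ! k')"
      proof (cases "k' < length s")
        case True
        then obtain j where "j < k'" "E (s ! j) (s ! k')" using Suc.prems(4) k' unfolding psched_def by blast
        then show ?thesis using True by (intro exI[of _ j]) (simp add: nth_append)
      next
        case False
        then have k'e: "k' = length s" using k' by simp
        then have "s \<noteq> []" using k' by auto
        then obtain u where u: "u \<in> set s" "E u v" using vc unfolding cand_def by auto
        then obtain j where j: "j < length s" "s ! j = u" by (auto simp: in_set_conv_nth)
        then show ?thesis using k'e u by (intro exI[of _ j]) (simp add: nth_append)
      qed
    qed
    have st: "{x\<in>A. x v = v} = Stab V E (s@[v])" using Suc.prems(5) unfolding Stab_def by auto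
    note R = Suc.IH[OF d sub len ps st]
    have e: "\<And>t. (s@[v])@t = s@v#t" by simp
    show ?thesis using R unfolding e .
  qed
  have vo1: "distinct (ord s)" "set (ord s) \<subseteq> cand V E s" using vo unfolding valid_order_def by auto
  note L = loop_props[OF pat Suc.prems(5) Suc.prems(2), of "gen V ord k", OF G vo1, of "{}"]
  have a: "\<forall>S\<in>set (gen V ord (Suc k) s A). is_schedule V E S \<and> (\<exists>t. S = s@t)"
    unfolding eq using L by blast
  have c: "\<forall>S. is_schedule V E S \<and> (\<exists>t. S = s@t) \<longrightarrow> (\<exists>S'\<in>set (gen V ord (Suc k) s A). sched_equiv V E S S')"
  proof (intro allI impI)
    fix S assume S: "is_schedule V E S \<and> (\<exists>t. S = s@t)"
    then obtain t where t: "S = s@t" by blast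
    have sS: "set S = V" "distinct S" using S unfolding is_schedule_def by auto
    have "t \<noteq> []" using t sS notV by auto
    then obtain u t' where ut: "t = u#t'" by (cases t) auto
    have uV: "u \<in> V" using sS t ut by auto
    have uns: "u \<notin> set s" using sS t ut by auto
    have "u \<in> cand V E s"
    proof (cases "s = []")
      case True
      then show ?thesis using uV unfolding cand_def by simp
    next
      case False
      have "1 \<le> length s" "length s < length S" using False t ut by (auto simp: Suc_leI)
      then obtain j where j: "j < length s" "E (S ! j) (S ! length s)"
        using S unfolding is_schedule_def by blast
      have "S ! j \<in> set s" using j t by (simp add: nth_append)
      moreover have "S ! length s = u" using t ut by simp
      ultimately show ?thesis using j False uV uns unfolding cand_def by auto
    qed
    then have "u \<in> set (ord s)" using vo unfolding valid_order_def by auto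
    then show "\<exists>S'\<in>set (gen V ord (Suc k) s A). sched_equiv V E S S'"
      unfolding eq using L S t ut by blast
  qed
  have b: "sorted_wrt (Q V E) (gen V ord (Suc k) s A)" unfolding eq using L by blast
  show ?case by (rule conjI[OF a conjI[OF b c]])
qed

theorem theorem3:
  fixes V :: "'a set" and E :: "'a \<Rightarrow> 'a \<Rightarrow> bool" and ord :: "'a list \<Rightarrow> 'a list"
  assumes "pattern V E"
    and "valid_order V E ord"
  defines "Out \<equiv> gen_output V E ord"
  shows "(\<forall>S\<in>set Out. is_schedule V E S)
    \<and> (\<forall>i j. i < length Out \<and> j < length Out \<and> i \<noteq> j \<longrightarrow> \<not> sched_equiv V E (Out ! i) (Out ! j))
    \<and> (\<forall>S. is_schedule V E S \<longrightarrow> (\<exists>S'\<in>set Out. sched_equiv V E S S'))"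
proof -
  have st: "Aut V E = Stab V E []" unfolding Stab_def by simp
  have ps: "psched E []" unfolding psched_def by simp
  have d0: "distinct []" "set [] \<subseteq> V" "length [] + card V = card V" by simp_all
  note R0 = gen_props[OF assms(1,2) d0 ps st]
  have e0: "\<And>S. (\<exists>t. S = [] @ t) = True" by simp
  note R = R0[unfolded e0 simp_thms]
  have R': "(\<forall>S\<in>set Out. is_schedule V E S) \<and> sorted_wrt (Q V E) Out
     \<and> (\<forall>S. is_schedule V E S \<longrightarrow> (\<exists>S'\<in>set Out. sched_equiv V E S S'))"
    using R unfolding Out_def gen_output_def by blast
  have "\<forall>i j. i < length Out \<and> j < length Out \<and> i \<noteq> j \<longrightarrow> \<not> sched_equiv V E (Out ! i) (Out ! j)"
  proof (intro allI impI)
    fix i j assume ij: "i < length Out \<and> j < length Out \<and> i \<noteq> j"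
    have so: "sorted_wrt (Q V E) Out" using R' by blast
    show "\<not> sched_equiv V E (Out ! i) (Out ! j)"
    proof (cases "i < j")
      case True
      then show ?thesis using so ij unfolding sorted_wrt_iff_nth_less Q_def by blast
    next
      case False
      then have "j < i" using ij by simp
      then show ?thesis using so ij unfolding sorted_wrt_iff_nth_less Q_def by blast
    qed
  qed
  then show ?thesis using R' by blast
qed

end
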